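(* Assume $\mathfrak C_R \subseteq \mathfrak m^2$, and let $S$, $s$, $b_1<\cdots<b_s$ and $i_0$ be as in the context. Then the Herzog–Kunz sequence $\widetilde a_1 < \cdots < \widetilde a_{n+s}$ of $S$ satisfies $\widetilde a_j = a_j$ for $j \le i_0$ and $$\{\widetilde a_{i_0+1}, \ldots, \widetilde a_{n+s}\} = \{a_{i_0+1}, \ldots, a_n, b_1, \ldots, b_s\},$$ and $S = k[[\widetilde x_1, \ldots, \widetilde x_{n+s}]]$ with Herzog–Kunz generators $\widetilde x_j = x_j$ for $j \le i_0$ and $\widetilde x_j = t^{\widetilde a_j}$ for $j > i_0$.
   Context: Let $k$ be an algebraically closed field of characteristic $0$ and let $(R,\mathfrak m)$ be a complete local noetherian domain of dimension $1$ containing $k$ with $R/\mathfrak m = k$; its normalization is $\overline R = k[[t]]$, $R\subseteq k[[t]]$ finite birational. Let $v$ be the $t$-adic valuation; for $A \subseteq k((t))$ let $v(A)=\{v(f): f\in A\setminus\{0\}\}$, and $V(T)=v(T)$ for a ring $T$. The conductor is $\mathfrak C_R=\{x\in\overline R: x\overline R\subseteq R\} = t^{c_R}\overline R$. For any such ring $T$ (with maximal ideal $\mathfrak m_T$), its Herzog–Kunz sequence is $v(\mathfrak m_T)\setminus v(\mathfrak m_T^2)$ listed increasingly, and Herzog–Kunz generators are elements of $T$ having exactly these valuations (they generate $T$ as $k[[\cdot]]$, the image of a power series ring). Let $a_1<\cdots<a_n$ be the Herzog–Kunz sequence of $R$ and $x_1,\ldots,x_n$ Herzog–Kunz generators of $R$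 with $x_1 = t^{a_1}$. Let $S = R[\mathfrak C_R/x_1]$, let $b_1<\cdots<b_s$ be the elements of $\{c_R-a_1, c_R-a_1+1, \ldots, c_R-1\}$ not in $V(R)$ (so $s$ is the reduced type of $R$), and let $i_0 = \max\{i : a_i < c_R - a_1\}$. Known facts (used as given): $S = R[t^{b_1},\ldots,t^{b_s}]$ is again such a ring, $\mathfrak C_S = t^{c_R-a_1}\overline R$ so $c_S = c_R - a_1$, and $\mathrm{edim}(S) = n+s$. *)

theory Defs
  imports "HOL-Computational_Algebra.Computational_Algebra"
begin

text \<open>Power series over k: the type 'a fps, t = fps_X, v = subdegree.\<close>

definition alg_closed_field :: "('a::field) itself \<Rightarrow> bool" where
  "alg_closed_field _ \<longleftrightarrow> (\<forall>p :: 'a poly. degree p > 0 \<longrightarrow> (\<exists>z. poly p z = 0))"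

definition vals :: "'a::field fps set \<Rightarrow> nat set" where
  "vals A = {subdegree f | f. f \<in> A \<and> f \<noteq> 0}"

text \<open>A complete one-dimensional local k-subalgebra of k[[t]] with residue field k,
  normalization k[[t]] (finite birational): a k-subalgebra containing t^c k[[t]] for some c.\<close>
definition curve_ring :: "'a::field fps set \<Rightarrow> bool" where
  "curve_ring R \<longleftrightarrow>
     (\<forall>a. fps_const a \<in> R) \<and>
     (\<forall>f\<in>R. \<forall>g\<in>R. f + g \<in> R \<and> f * g \<in> R \<and> - f \<in> R) \<and>
     (\<exists>c. \<forall>f. (\<forall>i<c. fps_nth f i = 0) \<longrightarrow> f \<in> R)"

definition max_ideal :: "'a::field fps set \<Rightarrow> 'a fps set" where
  "max_ideal R = {f \<in> R. fps_nth f 0 = 0}"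

definition fps_ideal_mult :: "'a::field fps set \<Rightarrow> 'a fps set \<Rightarrow> 'a fps set" where
  "fps_ideal_mult I J = {(\<Sum>i<N. f i * g i) | (N::nat) f g. \<forall>i<N. f i \<in> I \<and> g i \<in> J}"

definition conductor :: "'a::field fps set \<Rightarrow> 'a fps set" where
  "conductor R = {x. \<forall>y. x * y \<in> R}"

definition cond_exp :: "'a::field fps set \<Rightarrow> nat" where
  "cond_exp R = (LEAST c. conductor R = {f. \<forall>i<c. fps_nth f i = 0})"

definition HK_seq :: "'a::field fps set \<Rightarrow> nat list" where
  "HK_seq R = sorted_list_of_set
     (vals (max_ideal R) - vals (fps_ideal_mult (max_ideal R) (max_ideal R)))"

inductive_set alg_gen :: "'a::field fps set \<Rightarrow> 'a fps set" for Y where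
  const: "fps_const a \<in> alg_gen Y"
| gen: "y \<in> Y \<Longrightarrow> y \<in> alg_gen Y"
| add: "f \<in> alg_gen Y \<Longrightarrow> g \<in> alg_gen Y \<Longrightarrow> f + g \<in> alg_gen Y"
| mult: "f \<in> alg_gen Y \<Longrightarrow> g \<in> alg_gen Y \<Longrightarrow> f * g \<in> alg_gen Y"

text \<open>k[[Y]]: the image of the power series ring in the elements Y (all of positive
  valuation), i.e. the t-adic closure of k[Y].\<close>
definition ps_gen :: "'a::field fps set \<Rightarrow> 'a fps set" where
  "ps_gen Y = {f. \<forall>N. \<exists>g\<in>alg_gen Y. \<forall>i<N. fps_nth f i = fps_nth g i}"

end

theory Submission
  imports Defs
begin

definition Tl :: "nat \<Rightarrow> 'a::field fps set" where
  "Tl N = {f. \<forall>i<N. f $ i = 0}"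

lemma Tl_iff: "f \<in> Tl N \<longleftrightarrow> f = 0 \<or> N \<le> subdegree f"
  unfolding Tl_def by (auto intro: subdegree_geI nth_less_subdegree_zero[OF less_le_trans])

lemma Tl_0[simp]: "0 \<in> Tl N" by (simp add: Tl_def)
lemma Tl_add: "f \<in> Tl N \<Longrightarrow> g \<in> Tl N \<Longrightarrow> f + g \<in> Tl N" by (simp add: Tl_def)
lemma Tl_diff: "f \<in> Tl N \<Longrightarrow> g \<in> Tl N \<Longrightarrow> f - g \<in> Tl N" by (simp add: Tl_def)
lemma Tl_uminus: "f \<in> Tl N \<Longrightarrow> - f \<in> Tl N" by (simp add: Tl_def)
lemma Tl_mono: "a \<le> b \<Longrightarrow> f \<in> Tl b \<Longrightarrow> f \<in> Tl a" by (simp add: Tl_def)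
lemma Tl_mult: "f \<in> Tl a \<Longrightarrow> g \<in> Tl b \<Longrightarrow> f * g \<in> Tl (a + b)"
  unfolding Tl_iff by (cases "f = 0 \<or> g = 0") auto
lemma Tl_mult_left: "g \<in> Tl b \<Longrightarrow> f * g \<in> Tl b"
  using Tl_mult[of f 0 g b] by (simp add: Tl_def)
lemma Tl_mult_right: "f \<in> Tl b \<Longrightarrow> f * g \<in> Tl b"
  using Tl_mult[of f b g 0] by (simp add: Tl_def)
lemma Tl_X: "fps_X ^ d \<in> Tl N \<longleftrightarrow> N \<le> d"
  by (auto simp: Tl_def)
lemma Tl_sum: "(\<And>i. i < M \<Longrightarrow> f i \<in> Tl N) \<Longrightarrow> (\<Sum>i<(M::nat). f i) \<in> Tl N"
  by (induction M) (auto intro: Tl_add)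
lemma Tl_1_iff: "f \<in> Tl 1 \<longleftrightarrow> f $ 0 = 0" by (simp add: Tl_def)
lemma Tl_Suc0_iff[simp]: "f \<in> Tl (Suc 0) \<longleftrightarrow> f $ 0 = 0" by (simp add: Tl_def)

lemma alg_gen_sum: "(\<And>i. i < M \<Longrightarrow> f i \<in> alg_gen Y) \<Longrightarrow> (\<Sum>i<(M::nat). f i) \<in> alg_gen Y"
proof (induction M)
  case 0 then show ?case using alg_gen.const[of 0 Y] by simp
next
  case (Suc M) then show ?case by (auto intro: alg_gen.add)
qed

definition subr :: "'a::field fps set \<Rightarrow> bool" where
  "subr S \<longleftrightarrow> (\<forall>a. fps_const a \<in> S) \<and> (\<forall>f\<in>S. \<forall>g\<in>S. f + g \<in> S \<and> f * g \<in> S \<and> - f \<in> S)"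

lemma subr_sum: "subr S \<Longrightarrow> (\<And>i. i < M \<Longrightarrow> f i \<in> S) \<Longrightarrow> (\<Sum>i<(M::nat). f i) \<in> S"
proof (induction M)
  case 0 then show ?case unfolding subr_def by (metis fps_const_0_eq_0 lessThan_0 sum.empty)
next
  case (Suc M) then show ?case unfolding subr_def by auto
qed

lemma subr_diff: "subr S \<Longrightarrow> f \<in> S \<Longrightarrow> g \<in> S \<Longrightarrow> f - g \<in> S"
  unfolding subr_def by (metis diff_conv_add_uminus)

lemma alg_gen_sub: "subr S \<Longrightarrow> Y \<subseteq> S \<Longrightarrow> alg_gen Y \<subseteq> S"
proof
  fix f assume "subr S" "Y \<subseteq> S" "f \<in> alg_gen Y"
  from \<open>f \<in> alg_gen Y\<close> show "f \<in> S"
    by (induction rule: alg_gen.induct) (use \<open>subr S\<close> \<open>Y \<subseteq> S\<close> in \<open>auto simp: subr_def\<close>)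
qed

lemma sq_sub: "subr S \<Longrightarrow> fps_ideal_mult (max_ideal S) (max_ideal S) \<subseteq> max_ideal S"
proof
  fix h assume S: "subr S" and "h \<in> fps_ideal_mult (max_ideal S) (max_ideal S)"
  then obtain N :: nat and p q where h: "h = (\<Sum>i<N. p i * q i)" and pq: "\<forall>i<N. p i \<in> max_ideal S \<and> q i \<in> max_ideal S"
    unfolding fps_ideal_mult_def by blast
  have "h \<in> S" unfolding h using pq S by (intro subr_sum) (auto simp: max_ideal_def subr_def)
  moreover have "h \<in> Tl 1" unfolding h using pq
    by (intro Tl_sum) (auto simp: max_ideal_def Tl_1_iff intro!: Tl_mult_left)
  ultimately show "h \<in> max_ideal S" by (simp add: max_ideal_def Tl_1_iff)
qed

lemma approx:
  fixes S :: "'a::field fps set"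
  assumes S: "subr S" and Y: "Y \<subseteq> S"
    and cov: "\<forall>d \<in> vals (max_ideal S) - vals (fps_ideal_mult (max_ideal S) (max_ideal S)).
                \<exists>y\<in>Y. y \<noteq> 0 \<and> subdegree y = d"
  shows "\<forall>f\<in>S. \<exists>g\<in>alg_gen Y. f - g \<in> Tl N"
proof (induction N rule: less_induct)
  case (less N)
  note outer = less.IH
  let ?A = "alg_gen Y"
  have A0: "0 \<in> ?A" using alg_gen.const[of 0 Y] by simp
  have Ac: "fps_const a \<in> ?A" for a by (rule alg_gen.const)
  have Sc: "fps_const a \<in> S" for a using S by (simp add: subr_def)
  have Sm: "f \<in> S \<Longrightarrow> g \<in> S \<Longrightarrow> f * g \<in> S" for f g using S by (simp add: subr_def)
  have Sd: "f \<in> S \<Longrightarrow> g \<in> S \<Longrightarrow> f - g \<in> S" for f g using S by (rule subr_diff)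
  have main: "f \<in> S \<Longrightarrow> \<exists>g\<in>?A. f - g \<in> Tl N" for f
  proof (induction f rule: measure_induct_rule[of "\<lambda>f. N - subdegree f"])
    case (less f)
    show ?case
    proof (cases "f \<in> Tl N")
      case True then show ?thesis using A0 by force
    next
      case False
      define d where "d = subdegree f"
      have fnz: "f \<noteq> 0" and dN: "d < N" using False by (auto simp: Tl_iff d_def)
      have step: "\<exists>g\<in>?A. f' - g \<in> Tl N" if f': "f' \<in> S" "\<forall>i\<le>d. f' $ i = 0" for f'
      proof (cases "f' \<in> Tl N")
        case True then show ?thesis using A0 by force
      next
        case False
        then have "f' \<noteq> 0" "subdegree f' < N" by (auto simp: Tl_iff)
        moreover have "subdegree f' > d" using f' \<open>f' \<noteq> 0\<close> by (intro subdegree_greaterI) auto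
        ultimately have "N - subdegree f' < N - subdegree f" using dN d_def by linarith
        then show ?thesis using less.IH f'(1) by blast
      qed
      have zex: "\<exists>z\<in>S. z \<noteq> 0 \<and> subdegree z = d \<and> (\<exists>gz\<in>?A. z - gz \<in> Tl N)"
      proof (cases "d = 0")
        case True
        then show ?thesis using Sc[of 1] Ac[of 1] by (intro bexI[of _ 1]) (auto intro!: bexI[of _ 1])
      next
        case d0: False
        have fm: "f \<in> max_ideal S" using less.prems d0 by (auto simp: max_ideal_def d_def)
        then have dv: "d \<in> vals (max_ideal S)" using fnz by (auto simp: vals_def d_def)
        show ?thesis
        proof (cases "d \<in> vals (fps_ideal_mult (max_ideal S) (max_ideal S))")
          case False
          then obtain y where "y \<in> Y" "y \<noteq> 0" "subdegree y = d" using cov dv by blast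
          then show ?thesis using Y alg_gen.gen[of y Y] by (intro bexI[of _ y]) (auto intro!: bexI[of _ y])
        next
          case True
          then obtain h where h: "h \<in> fps_ideal_mult (max_ideal S) (max_ideal S)" "h \<noteq> 0" "subdegree h = d"
            by (auto simp: vals_def)
          then obtain M :: nat and p q where hpq: "h = (\<Sum>i<M. p i * q i)"
            and pq: "\<forall>i<M. p i \<in> max_ideal S \<and> q i \<in> max_ideal S"
            unfolding fps_ideal_mult_def by blast
          have hS: "h \<in> S" using sq_sub[OF S] h(1) by (auto simp: max_ideal_def)
          have N1: "N - 1 < N" "1 \<le> N - 1" using dN d0 by auto
          have "\<forall>i. \<exists>g. i < M \<longrightarrow> g \<in> ?A \<and> p i - g \<in> Tl (N - 1)"
            using outer[OF N1(1)] pq by (auto simp: max_ideal_def)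
          then obtain p' where p': "\<And>i. i < M \<Longrightarrow> p' i \<in> ?A \<and> p i - p' i \<in> Tl (N - 1)" by metis
          have "\<forall>i. \<exists>g. i < M \<longrightarrow> g \<in> ?A \<and> q i - g \<in> Tl (N - 1)"
            using outer[OF N1(1)] pq by (auto simp: max_ideal_def)
          then obtain q' where q': "\<And>i. i < M \<Longrightarrow> q' i \<in> ?A \<and> q i - q' i \<in> Tl (N - 1)" by metis
          have "(\<Sum>i<M. p' i * q' i) \<in> ?A"
            using p' q' by (intro alg_gen_sum alg_gen.mult) auto
          moreover have "h - (\<Sum>i<M. p' i * q' i) \<in> Tl N"
          proof -
            have "h - (\<Sum>i<M. p' i * q' i) = (\<Sum>i<M. p i * (q i - q' i) + (p i - p' i) * q' i)"
              unfolding hpq by (simp add: sum_subtractf[symmetric] algebra_simps)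
            also have "\<dots> \<in> Tl N"
            proof (intro Tl_sum Tl_add)
              fix i assume i: "i < M"
              have pi1: "p i \<in> Tl 1" using pq i by (auto simp: max_ideal_def Tl_1_iff)
              have qi1: "q i \<in> Tl 1" using pq i by (auto simp: max_ideal_def Tl_1_iff)
              have dq: "q i - q' i \<in> Tl (N - 1)" and dp: "p i - p' i \<in> Tl (N - 1)" using p' q' i by auto
              have "q i - (q i - q' i) \<in> Tl 1" using qi1 Tl_mono[OF N1(2) dq] by (rule Tl_diff)
              then have qi1': "q' i \<in> Tl 1" by simp
              show "p i * (q i - q' i) \<in> Tl N" using Tl_mult[OF pi1 dq] N1 by simp
              show "(p i - p' i) * q' i \<in> Tl N" using Tl_mult[OF dp qi1'] N1 by simp
            qed
            finally show ?thesis .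
          qed
          ultimately show ?thesis using hS h by blast
        qed
      qed
      then obtain z gz where z: "z \<in> S" "z \<noteq> 0" "subdegree z = d" and gz: "gz \<in> ?A" "z - gz \<in> Tl N"
        by blast
      define lam where "lam = f $ d / z $ d"
      have zd: "z $ d \<noteq> 0" using z by auto
      define f' where "f' = f - fps_const lam * z"
      have f'S: "f' \<in> S" unfolding f'_def using less.prems z Sc Sm Sd by blast
      have "\<forall>i\<le>d. f' $ i = 0"
      proof (intro allI impI)
        fix i assume "i \<le> d"
        then consider "i < d" | "i = d" by linarith
        then show "f' $ i = 0"
        proof cases
          case 1
          then have "f $ i = 0" "z $ i = 0" using z d_def by (auto intro: nth_less_subdegree_zero)
          then show ?thesis by (simp add: f'_def)
        next
          case 2 then show ?thesis using zd by (simp add: f'_def lam_def)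
        qed
      qed
      then obtain g' where g': "g' \<in> ?A" "f' - g' \<in> Tl N" using step f'S by blast
      have "g' + fps_const lam * gz \<in> ?A" using g' gz Ac by (intro alg_gen.add alg_gen.mult)
      moreover have "f - (g' + fps_const lam * gz) = (f' - g') + fps_const lam * (z - gz)"
        by (simp add: f'_def algebra_simps)
      moreover have "\<dots> \<in> Tl N" using g' gz by (intro Tl_add Tl_mult_left)
      ultimately show ?thesis by metis
    qed
  qed
  then show ?case by blast
qed

lemma conductor_Tl:
  fixes R :: "'a::field fps set"
  assumes "curve_ring R"
  shows "conductor R = Tl (cond_exp R)"
proof -
  obtain c1 where c1: "\<forall>f. (\<forall>i<c1. f $ i = 0) \<longrightarrow> f \<in> R" using assms by (auto simp: curve_ring_def)
  have c1T: "Tl c1 \<subseteq> R" using c1 by (auto simp: Tl_def)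
  define P where "P d \<longleftrightarrow> (\<exists>x\<in>conductor R. x \<noteq> 0 \<and> subdegree x = d)" for d
  have "fps_X ^ c1 \<in> conductor R"
    unfolding conductor_def using c1T Tl_mult_right[of "fps_X ^ c1" c1] by (auto simp: Tl_X)
  then have "P c1" unfolding P_def by (intro bexI[of _ "fps_X ^ c1"]) (auto simp: fps_X_power_subdegree)
  define c0 where "c0 = (LEAST d. P d)"
  have "P c0" unfolding c0_def by (rule LeastI) fact
  then obtain x0 where x0: "x0 \<in> conductor R" "x0 \<noteq> 0" "subdegree x0 = c0" unfolding P_def by blast
  have le: "c0 \<le> subdegree x" if "x \<in> conductor R" "x \<noteq> 0" for x
    unfolding c0_def using that by (intro Least_le) (auto simp: P_def)
  have eq: "conductor R = Tl c0"
  proof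
    show "conductor R \<subseteq> Tl c0" using le by (force simp: Tl_iff)
  next
    show "Tl c0 \<subseteq> conductor R"
    proof
      fix f :: "'a fps" assume f: "f \<in> Tl c0"
      define u where "u = fps_shift c0 x0"
      have x0u: "x0 = u * fps_X ^ c0" unfolding u_def using x0 by (simp add: fps_shift_times_fps_X_power)
      have u0: "u $ 0 \<noteq> 0" unfolding u_def using x0 nth_subdegree_nonzero[of x0] by simp
      have fdec: "f = fps_shift c0 f * fps_X ^ c0"
      proof (cases "f = 0")
        case False then show ?thesis using f by (intro subdegree_decompose') (auto simp: Tl_iff)
      qed simp
      show "f \<in> conductor R" unfolding conductor_def
      proof (rule CollectI, rule allI)
        fix y
        have fy: "f * y = x0 * (inverse u * fps_shift c0 f * y)"
        proof -
          have "x0 * (inverse u * fps_shift c0 f * y) = (inverse u * u) * (fps_shift c0 f * fps_X ^ c0) * y"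
            unfolding x0u by (simp add: algebra_simps)
          also have "\<dots> = f * y" using u0 fdec[symmetric] by (simp add: inverse_mult_eq_1)
          finally show ?thesis ..
        qed
        have "x0 * (inverse u * fps_shift c0 f * y) \<in> R" using x0(1) by (simp add: conductor_def)
        then show "f * y \<in> R" using fy by argo
      qed
    qed
  qed
  have "conductor R = {f. \<forall>i<cond_exp R. f $ i = 0}"
    unfolding cond_exp_def by (rule LeastI[of _ c0]) (simp add: eq Tl_def)
  then show ?thesis by (simp add: Tl_def)
qed

lemma sl_append:
  fixes A C :: "nat set"
  assumes "finite A" "finite C" "\<forall>x\<in>A. \<forall>y\<in>C. x < y"
  shows "sorted_list_of_set (A \<union> C) = sorted_list_of_set A @ sorted_list_of_set C"
proof -
  have disj: "A \<inter> C = {}" using assms(3) by auto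
  show ?thesis
    using assms disj
    by (subst sorted_list_of_set_unique[symmetric])
       (auto simp: sorted_wrt_append card_Un_disjoint)
qed

lemma S_char:
  fixes R :: "'a::field fps set"
  assumes R: "subr R"
  shows "alg_gen (R \<union> Tl e) = {f. \<exists>r\<in>R. f - r \<in> Tl e}"
proof
  show "alg_gen (R \<union> Tl e) \<subseteq> {f. \<exists>r\<in>R. f - r \<in> Tl e}"
  proof
    fix f assume "f \<in> alg_gen (R \<union> Tl e)"
    then show "f \<in> {f. \<exists>r\<in>R. f - r \<in> Tl e}"
    proof (induction rule: alg_gen.induct)
      case (const a) then show ?case using R by (auto simp: subr_def intro!: bexI[of _ "fps_const a"])
    next
      case (gen y) then show ?case
      proof
        assume "y \<in> R" then show ?thesis by (auto intro!: bexI[of _ y])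
      next
        assume "y \<in> Tl e" then show ?thesis using R
          by (auto simp: subr_def intro!: bexI[of _ 0]) (metis fps_const_0_eq_0)
      qed
    next
      case (add f g)
      then obtain r1 r2 where "r1 \<in> R" "f - r1 \<in> Tl e" "r2 \<in> R" "g - r2 \<in> Tl e" by auto
      moreover have "f + g - (r1 + r2) = (f - r1) + (g - r2)" by simp
      ultimately have "f + g - (r1 + r2) \<in> Tl e" by (metis Tl_add)
      then show ?case using R \<open>r1 \<in> R\<close> \<open>r2 \<in> R\<close> by (auto simp: subr_def intro!: bexI[of _ "r1 + r2"])
    next
      case (mult f g)
      then obtain r1 r2 where "r1 \<in> R" "f - r1 \<in> Tl e" "r2 \<in> R" "g - r2 \<in> Tl e" by auto
      moreover have "f * g - (r1 * r2) = (f - r1) * g + r1 * (g - r2)" by (simp add: algebra_simps)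
      ultimately have "f * g - (r1 * r2) \<in> Tl e" by (metis Tl_add Tl_mult_left Tl_mult_right)
      then show ?case using R \<open>r1 \<in> R\<close> \<open>r2 \<in> R\<close> by (auto simp: subr_def intro!: bexI[of _ "r1 * r2"])
    qed
  qed
next
  show "{f. \<exists>r\<in>R. f - r \<in> Tl e} \<subseteq> alg_gen (R \<union> Tl e)"
  proof
    fix f assume "f \<in> {f. \<exists>r\<in>R. f - r \<in> Tl e}"
    then obtain r where "r \<in> R" "f - r \<in> Tl e" by auto
    then have "r + (f - r) \<in> alg_gen (R \<union> Tl e)" by (intro alg_gen.add alg_gen.gen) auto
    then show "f \<in> alg_gen (R \<union> Tl e)" by simp
  qed
qed

lemma subr_alg_gen: "subr (alg_gen Y)"
  unfolding subr_def
proof (intro conjI ballI allI)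
  fix f g assume f: "f \<in> alg_gen Y" and g: "g \<in> alg_gen Y"
  show "f + g \<in> alg_gen Y" using f g by (rule alg_gen.add)
  show "f * g \<in> alg_gen Y" using f g by (rule alg_gen.mult)
  have "fps_const (-1) * f \<in> alg_gen Y" using f by (intro alg_gen.mult alg_gen.const)
  moreover have "fps_const (-1) * f = - f" by (simp add: fps_const_neg[symmetric])
  ultimately show "- f \<in> alg_gen Y" by simp
qed (rule alg_gen.const)

lemma fim_mono: "I \<subseteq> I' \<Longrightarrow> J \<subseteq> J' \<Longrightarrow> fps_ideal_mult I J \<subseteq> fps_ideal_mult I' J'"
  unfolding fps_ideal_mult_def by blast

lemma fim_0: "(0::'a::field fps) \<in> fps_ideal_mult I J"
  unfolding fps_ideal_mult_def by (rule CollectI, rule exI[of _ 0]) auto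

lemma fim_prod: "f \<in> I \<Longrightarrow> g \<in> J \<Longrightarrow> f * g \<in> fps_ideal_mult I J"
  unfolding fps_ideal_mult_def
  by (rule CollectI, rule exI[of _ 1], rule exI[of _ "\<lambda>_. f"], rule exI[of _ "\<lambda>_. g"]) auto

lemma fim_add:
  assumes "x \<in> fps_ideal_mult I J" "y \<in> fps_ideal_mult I J"
  shows "x + y \<in> fps_ideal_mult I J"
proof -
  obtain N :: nat and f g where x: "x = (\<Sum>i<N. f i * g i)" and fg: "\<forall>i<N. f i \<in> I \<and> g i \<in> J"
    using assms(1) unfolding fps_ideal_mult_def by blast
  obtain M :: nat and f' g' where y: "y = (\<Sum>i<M. f' i * g' i)" and fg': "\<forall>i<M. f' i \<in> I \<and> g' i \<in> J"
    using assms(2) unfolding fps_ideal_mult_def by blast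
  define F where "F i = (if i < N then f i else f' (i - N))" for i
  define G where "G i = (if i < N then g i else g' (i - N))" for i
  have sumeq: "(\<Sum>i<N + K. F i * G i) = x + (\<Sum>i<K. f' i * g' i)" for K
  proof (induction K)
    case 0 then show ?case by (simp add: x F_def G_def)
  next
    case (Suc K) then show ?case by (simp add: F_def G_def)
  qed
  have "\<forall>i<N + M. F i \<in> I \<and> G i \<in> J" using fg fg' by (auto simp: F_def G_def)
  then show ?thesis unfolding fps_ideal_mult_def using sumeq[of M] y
    by (intro CollectI exI[of _ "N + M"] exI[of _ F] exI[of _ G]) auto
qed

lemma fim_sum: "(\<And>i. i < (K::nat) \<Longrightarrow> h i \<in> fps_ideal_mult I J) \<Longrightarrow> (\<Sum>i<K. h i) \<in> fps_ideal_mult I J"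
  by (induction K) (auto intro: fim_add fim_0)

theorem mainTheorem11:
  fixes R :: "'a::field_char_0 fps set" and xs :: "'a fps list"
  assumes "alg_closed_field TYPE('a)"
    and "curve_ring R"
    and "length xs = length (HK_seq R)"
    and "\<forall>i<length xs. xs ! i \<in> R \<and> subdegree (xs ! i) = HK_seq R ! i"
    and "xs ! 0 = fps_X ^ (HK_seq R ! 0)"
    and "conductor R \<subseteq> fps_ideal_mult (max_ideal R) (max_ideal R)"
  shows
    "let as = HK_seq R; n = length as; a1 = as ! 0; c = cond_exp R;
         S = alg_gen (R \<union> {y. xs ! 0 * y \<in> conductor R});
         bs = sorted_list_of_set ({c - a1..<c} - vals R); s = length bs;
         i0 = Max ({0} \<union> {i + 1 | i. i < n \<and> as ! i < c - a1});
         hs = HK_seq S;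
         xt = (\<lambda>j. if j < i0 then xs ! j else fps_X ^ (hs ! j))
     in length hs = n + s \<and>
        (\<forall>j<i0. hs ! j = as ! j) \<and>
        set (drop i0 hs) = set (drop i0 as) \<union> set bs \<and>
        (\<forall>j<n + s. xt j \<in> S \<and> subdegree (xt j) = hs ! j) \<and>
        S = ps_gen (xt ` {..<n + s})"
proof -
  let ?m = "max_ideal R"
  let ?m2 = "fps_ideal_mult ?m ?m"
  define VR where "VR = vals ?m - vals ?m2"
  have Rs: "subr R" using assms(2) by (simp add: curve_ring_def subr_def)
  define c where "c = cond_exp R"
  have cond: "conductor R = Tl c" unfolding c_def by (rule conductor_Tl[OF assms(2)])
  have TcR: "Tl c \<subseteq> R"
  proof
    fix f :: "'a fps" assume "f \<in> Tl c"
    then have "f \<in> conductor R" using cond by simp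
    then have "f * 1 \<in> R" unfolding conductor_def by blast
    then show "f \<in> R" by simp
  qed
  have Tcm2: "Tl c \<subseteq> ?m2" using assms(6) cond by simp
  have m2m: "?m2 \<subseteq> ?m" by (rule sq_sub[OF Rs])
  have mR: "?m \<subseteq> R" by (auto simp: max_ideal_def)
  have Xc: "fps_X ^ c \<in> ?m" using Tcm2 m2m Tl_X by auto
  have c_in: "c \<in> vals ?m" using Xc
    by (auto simp: vals_def fps_X_power_subdegree intro!: exI[of _ "fps_X ^ c"])
  define a where "a = (LEAST d. d \<in> vals ?m)"
  have a_in: "a \<in> vals ?m" unfolding a_def by (rule LeastI) (rule c_in)
  have a_le: "a \<le> d" if "d \<in> vals ?m" for d unfolding a_def using that by (rule Least_le)
  have mTa: "?m \<subseteq> Tl a"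
  proof
    fix f assume "f \<in> ?m"
    then have "f = 0 \<or> subdegree f \<in> vals ?m" by (auto simp: vals_def)
    then show "f \<in> Tl a" using a_le by (auto simp: Tl_iff)
  qed
  have a1: "1 \<le> a"
  proof -
    obtain f where f: "f \<in> ?m" "f \<noteq> 0" "subdegree f = a" using a_in by (auto simp: vals_def)
    have "f $ 0 = 0" using f by (simp add: max_ideal_def)
    then show ?thesis using f nth_subdegree_nonzero[of f] by (cases a) auto
  qed
  have m2T: "?m2 \<subseteq> Tl (a + a)"
  proof
    fix h assume "h \<in> ?m2"
    then obtain N :: nat and p q where h: "h = (\<Sum>i<N. p i * q i)" and pq: "\<forall>i<N. p i \<in> ?m \<and> q i \<in> ?m"
      unfolding fps_ideal_mult_def by blast
    show "h \<in> Tl (a + a)" unfolding h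
    proof (intro Tl_sum)
      fix i assume "i < N"
      then have "p i \<in> Tl a" "q i \<in> Tl a" using pq mTa by blast+
      then show "p i * q i \<in> Tl (a + a)" by (rule Tl_mult)
    qed
  qed
  have "(fps_X ^ c :: 'a fps) \<in> Tl c" by (simp add: Tl_X)
  then have "fps_X ^ c \<in> ?m2" using Tcm2 by (rule rev_subsetD)
  then have "(fps_X ^ c :: 'a fps) \<in> Tl (a + a)" using m2T by (rule rev_subsetD)
  then have c2a: "a + a \<le> c" by (simp add: Tl_X)
  have a_VR: "a \<in> VR"
  proof -
    have "a \<notin> vals ?m2"
    proof
      assume "a \<in> vals ?m2"
      then obtain f where f: "f \<in> ?m2" "f \<noteq> 0" "subdegree f = a" unfolding vals_def by blast
      then have "f \<in> Tl (a + a)" by (intro subsetD[OF m2T])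
      then show False using f a1 unfolding Tl_iff by linarith
    qed
    then show ?thesis using a_in by (simp add: VR_def)
  qed
  have big_m2: "d \<in> vals ?m2" if "c \<le> d" for d
  proof -
    have "(fps_X ^ d :: 'a fps) \<in> Tl c" using that by (simp add: Tl_X)
    then have "fps_X ^ d \<in> ?m2" by (rule subsetD[OF Tcm2])
    then show ?thesis unfolding vals_def by (intro CollectI exI[of _ "fps_X ^ d"]) (simp add: fps_X_power_subdegree)
  qed
  have VR_sub: "VR \<subseteq> {a..<c}"
  proof
    fix d assume d: "d \<in> VR"
    then have "a \<le> d" using a_le by (auto simp: VR_def)
    moreover have "d < c"
    proof (rule ccontr)
      assume "\<not> d < c" then have "d \<in> vals ?m2" using big_m2 by simp
      then show False using d unfolding VR_def by blast
    qed
    ultimately show "d \<in> {a..<c}" by simp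
  qed
  have finVR: "finite VR" using VR_sub finite_subset by blast
  have as_eq: "HK_seq R = sorted_list_of_set VR" by (simp add: HK_seq_def VR_def)
  have MinVR: "Min VR = a"
    using finVR a_VR VR_sub by (intro Min_eqI) auto
  have as0: "HK_seq R ! 0 = a"
  proof -
    have "VR \<noteq> {}" using a_VR by blast
    then have "sorted_list_of_set VR = Min VR # sorted_list_of_set (VR - {Min VR})"
      by (rule sorted_list_of_set_nonempty[OF finVR])
    then show ?thesis using MinVR as_eq by simp
  qed
  define e where "e = c - a"
  have e: "1 \<le> e" "a \<le> e" "a + e = c" using a1 c2a by (auto simp: e_def)
  have x0: "xs ! 0 = fps_X ^ a" using assms(5) as0 by simp
  have Qeq: "{y. xs ! 0 * y \<in> conductor R} = Tl e"
  proof (intro set_eqI iffI)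
    fix y :: "'a fps" assume "y \<in> {y. xs ! 0 * y \<in> conductor R}"
    then have h: "\<forall>i<c. (if i < a then 0 else y $ (i - a)) = 0"
      unfolding x0 cond by (simp add: Tl_def fps_X_power_mult_nth)
    show "y \<in> Tl e" unfolding Tl_def
    proof (intro CollectI allI impI)
      fix j assume "j < e"
      then show "y $ j = 0" using h[rule_format, of "j + a"] e by auto
    qed
  next
    fix y :: "'a fps" assume "y \<in> Tl e"
    then show "y \<in> {y. xs ! 0 * y \<in> conductor R}"
      unfolding x0 cond using e by (auto simp: Tl_def fps_X_power_mult_nth)
  qed
  define S where "S = {f. \<exists>r\<in>R. f - r \<in> Tl e}"
  have Seq: "alg_gen (R \<union> {y. xs ! 0 * y \<in> conductor R}) = S"
    unfolding Qeq S_def by (rule S_char[OF Rs])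
  have Ss: "subr S" using subr_alg_gen Seq by metis
  have R0: "0 \<in> R" using Rs unfolding subr_def by (metis fps_const_0_eq_0)
  have RS: "R \<subseteq> S" unfolding S_def by force
  have TeS: "Tl e \<subseteq> S" unfolding S_def using R0 by force
  have mS: "max_ideal S = {f. \<exists>r\<in>?m. f - r \<in> Tl e}"
  proof (intro set_eqI iffI)
    fix f assume "f \<in> max_ideal S"
    then obtain r where r: "r \<in> R" "f - r \<in> Tl e" "f $ 0 = 0" by (auto simp: max_ideal_def S_def)
    then have "(f - r) $ 0 = 0" using e by (auto simp: Tl_def)
    then show "f \<in> {f. \<exists>r\<in>?m. f - r \<in> Tl e}" using r by (auto simp: max_ideal_def)
  next
    fix f assume "f \<in> {f. \<exists>r\<in>?m. f - r \<in> Tl e}"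
    then obtain r where r: "r \<in> R" "f - r \<in> Tl e" "r $ 0 = 0" by (auto simp: max_ideal_def)
    then have "(f - r) $ 0 = 0" using e by (auto simp: Tl_def)
    then show "f \<in> max_ideal S" using r by (auto simp: max_ideal_def S_def)
  qed
  have mmS: "?m \<subseteq> max_ideal S" unfolding mS by force
  have mSTa: "max_ideal S \<subseteq> Tl a"
  proof
    fix f assume "f \<in> max_ideal S"
    then obtain r where "r \<in> ?m" "f - r \<in> Tl e" unfolding mS by blast
    then have "r + (f - r) \<in> Tl a" using mTa Tl_mono[OF e(2)] by (intro Tl_add) auto
    then show "f \<in> Tl a" by simp
  qed
  let ?mS2 = "fps_ideal_mult (max_ideal S) (max_ideal S)"
  have m2eq: "?mS2 = ?m2"
  proof
    show "?m2 \<subseteq> ?mS2" using mmS by (intro fim_mono)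
  next
    show "?mS2 \<subseteq> ?m2"
    proof
      fix h assume "h \<in> ?mS2"
      then obtain N :: nat and p q where h: "h = (\<Sum>i<N. p i * q i)"
        and pq: "\<forall>i<N. p i \<in> max_ideal S \<and> q i \<in> max_ideal S"
        unfolding fps_ideal_mult_def by blast
      show "h \<in> ?m2" unfolding h
      proof (intro fim_sum)
        fix i assume "i < N"
        then have p: "p i \<in> max_ideal S" and q: "q i \<in> max_ideal S" using pq by auto
        obtain r1 where r1: "r1 \<in> ?m" "p i - r1 \<in> Tl e" using p unfolding mS by blast
        obtain r2 where r2: "r2 \<in> ?m" "q i - r2 \<in> Tl e" using q unfolding mS by blast
        have eq: "p i * q i = r1 * r2 + ((p i - r1) * q i + r1 * (q i - r2))" by (simp add: algebra_simps)
        have "(p i - r1) * q i \<in> Tl (e + a)" using r1 q mSTa by (intro Tl_mult) auto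
        moreover have "r1 * (q i - r2) \<in> Tl (a + e)" using r1 r2 mTa by (intro Tl_mult) auto
        ultimately have "(p i - r1) * q i + r1 * (q i - r2) \<in> Tl c" using e by (simp add: add.commute Tl_add)
        then have X: "(p i - r1) * q i + r1 * (q i - r2) \<in> ?m2" using Tcm2 by blast
        have Y: "r1 * r2 \<in> ?m2" using r1 r2 by (intro fim_prod)
        show "p i * q i \<in> ?m2" unfolding eq using Y X by (rule fim_add)
      qed
    qed
  qed
  have valsS: "vals (max_ideal S) = vals ?m \<union> {e..}"
  proof (intro set_eqI iffI)
    fix d assume "d \<in> vals (max_ideal S)"
    then obtain f where f: "f \<in> max_ideal S" "f \<noteq> 0" "subdegree f = d" by (auto simp: vals_def)
    show "d \<in> vals ?m \<union> {e..}"
    proof (cases "e \<le> d")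
      case False
      obtain r where r: "r \<in> ?m" "f - r \<in> Tl e" using f unfolding mS by blast
      have agree: "r $ i = f $ i" if "i < e" for i using r(2) that by (auto simp: Tl_def)
      have "r $ d = f $ d" using agree False by simp
      then have rd: "r $ d \<noteq> 0" using f by auto
      then have rnz: "r \<noteq> 0" by auto
      have "subdegree r = d"
      proof (rule antisym)
        show "subdegree r \<le> d" using rd by (rule subdegree_leI)
        show "d \<le> subdegree r" using rnz
        proof (rule subdegree_geI)
          fix i assume "i < d" then show "r $ i = 0" using agree[of i] False f by auto
        qed
      qed
      then show ?thesis using r rnz by (auto simp: vals_def)
    qed simp
  next
    fix d assume "d \<in> vals ?m \<union> {e..}"
    then show "d \<in> vals (max_ideal S)"
    proof
      assume "d \<in> vals ?m" then show ?thesis using mmS by (auto simp: vals_def)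
    next
      assume "d \<in> {e..}"
      then have "(fps_X ^ d :: 'a fps) \<in> Tl e" by (simp add: Tl_X)
      then have "fps_X ^ d \<in> max_ideal S" using TeS \<open>d \<in> {e..}\<close> e by (auto simp: max_ideal_def)
      then show ?thesis by (auto simp: vals_def fps_X_power_subdegree intro!: exI[of _ "fps_X ^ d"])
    qed
  qed
  define B where "B = {e..<c} - vals R"
  have valsmR: "vals ?m \<subseteq> vals R" using mR by (auto simp: vals_def)
  have valsm2: "vals ?m2 \<subseteq> vals ?m" using m2m by (auto simp: vals_def)
  have valsR1: "d \<in> vals ?m" if dd: "d \<in> vals R" "1 \<le> d" for d
  proof -
    obtain f where f: "f \<in> R" "f \<noteq> 0" "subdegree f = d" using dd(1) unfolding vals_def by blast
    then have "f $ 0 = 0" using dd by (intro nth_less_subdegree_zero) auto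
    then show ?thesis using f by (auto simp: vals_def max_ideal_def)
  qed
  define VS where "VS = vals (max_ideal S) - vals ?mS2"
  have VSeq: "VS = VR \<union> B"
  proof (intro set_eqI iffI)
    fix d assume "d \<in> VS"
    then have d: "d \<in> vals ?m \<or> e \<le> d" "d \<notin> vals ?m2" unfolding VS_def valsS m2eq by auto
    show "d \<in> VR \<union> B"
    proof (cases "d \<in> vals ?m")
      case True then show ?thesis using d by (simp add: VR_def)
    next
      case False
      then have "e \<le> d" using d by simp
      moreover have "d < c" using d(2) big_m2 not_less by blast
      moreover have "d \<notin> vals R" using False valsR1 \<open>e \<le> d\<close> e by force
      ultimately show ?thesis by (simp add: B_def)
    qed
  next
    fix d assume "d \<in> VR \<union> B"
    then show "d \<in> VS" unfolding VS_def valsS m2eq VR_def B_def using valsm2 valsmR by auto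
  qed
  define L where "L = {x\<in>VR. x < e}"
  define M where "M = {x\<in>VR. e \<le> x}"
  define k where "k = card L"
  have finB: "finite B" unfolding B_def by auto
  have finL: "finite L" and finM: "finite M" using finVR by (auto simp: L_def M_def)
  have VRLM: "VR = L \<union> M" by (auto simp: L_def M_def)
  have VSLU: "VR \<union> B = L \<union> (M \<union> B)" by (auto simp: L_def M_def B_def)
  have LM: "\<forall>x\<in>L. \<forall>y\<in>M. x < y" by (auto simp: L_def M_def)
  have LMB: "\<forall>x\<in>L. \<forall>y\<in>M \<union> B. x < y" by (auto simp: L_def M_def B_def)
  have MB: "M \<inter> B = {}" using valsmR by (auto simp: M_def B_def VR_def)
  have as_split: "HK_seq R = sorted_list_of_set L @ sorted_list_of_set M"
    unfolding as_eq VRLM by (rule sl_append[OF finL finM LM])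
  have hsVS: "HK_seq S = sorted_list_of_set VS"
    unfolding HK_seq_def VS_def ..
  have hs_split: "HK_seq S = sorted_list_of_set L @ sorted_list_of_set (M \<union> B)"
    unfolding hsVS VSeq VSLU using finM finB by (intro sl_append[OF finL _ LMB]) auto
  have lenL: "length (sorted_list_of_set L) = k" by (simp add: k_def)
  have n_eq: "length (HK_seq R) = k + card M" by (simp add: as_split k_def)
  have len_hs: "length (HK_seq S) = k + card M + card B"
    using finM finB MB by (simp add: hs_split k_def card_Un_disjoint)
  have finVS: "finite VS" using VSeq finVR finB by simp
  have set_hs: "set (HK_seq S) = VS" unfolding hsVS using finVS by simp
  have iff: "(i < length (HK_seq R) \<and> HK_seq R ! i < e) \<longleftrightarrow> i < k" for i
  proof
    assume i: "i < length (HK_seq R) \<and> HK_seq R ! i < e"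
    show "i < k"
    proof (rule ccontr)
      assume "\<not> i < k"
      then have "HK_seq R ! i = sorted_list_of_set M ! (i - k)" unfolding as_split using lenL
        by (simp add: nth_append)
      moreover have "i - k < length (sorted_list_of_set M)" using i n_eq \<open>\<not> i < k\<close> by (simp; linarith)
      ultimately have "HK_seq R ! i \<in> M" using finM by (metis nth_mem set_sorted_list_of_set)
      then show False using i by (simp add: M_def)
    qed
  next
    assume i: "i < k"
    then have "HK_seq R ! i = sorted_list_of_set L ! i" unfolding as_split using lenL
      by (simp add: nth_append)
    then have "HK_seq R ! i \<in> L" using finL i lenL by (metis nth_mem set_sorted_list_of_set)
    then show "i < length (HK_seq R) \<and> HK_seq R ! i < e" using i n_eq by (simp add: L_def)
  qed
  have i0eq: "Max ({0} \<union> {i + 1 | i. i < length (HK_seq R) \<and> HK_seq R ! i < cond_exp R - HK_seq R ! 0}) = k"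
  proof -
    have "{i + 1 | i. i < length (HK_seq R) \<and> HK_seq R ! i < cond_exp R - HK_seq R ! 0} = {i + 1 | i. i < k}"
      using iff by (simp add: c_def[symmetric] as0 e_def[symmetric])
    moreover have "Max ({0} \<union> {i + 1 | i. i < k}) = k"
    proof (rule Max_eqI)
      show "finite ({0} \<union> {i + 1 | i. i < k})"
        by (rule finite_subset[of _ "{..k}"]) auto
      show "y \<le> k" if "y \<in> {0} \<union> {i + 1 | i. i < k}" for y using that by auto
      show "k \<in> {0} \<union> {i + 1 | i. i < k}"
        by (cases k) auto
    qed
    ultimately show ?thesis by simp
  qed
  have Beq: "{cond_exp R - HK_seq R ! 0..<cond_exp R} - vals R = B"
    by (simp add: B_def c_def[symmetric] as0 e_def)
  have slB: "set (sorted_list_of_set B) = B" "length (sorted_list_of_set B) = card B"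
    using finB by auto
  define xt where "xt = (\<lambda>j. if j < k then xs ! j else fps_X ^ (HK_seq S ! j))"
  have xt_prop: "xt j \<in> S \<and> subdegree (xt j) = HK_seq S ! j" if j: "j < length (HK_seq R) + length (sorted_list_of_set B)" for j
  proof (cases "j < k")
    case True
    then have "j < length xs" using assms(3) n_eq by simp
    then have "xs ! j \<in> R" "subdegree (xs ! j) = HK_seq R ! j" using assms(4) by auto
    moreover have "HK_seq S ! j = HK_seq R ! j" using True lenL by (simp add: as_split hs_split nth_append)
    moreover have "xt j = xs ! j" using True by (simp add: xt_def)
    ultimately show ?thesis using RS by auto
  next
    case False
    then have "HK_seq S ! j = sorted_list_of_set (M \<union> B) ! (j - k)" using lenL by (simp add: hs_split nth_append)
    moreover have "j - k < length (sorted_list_of_set (M \<union> B))" using j False n_eq slB finM finB MB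
      by (simp add: card_Un_disjoint)
    ultimately have "HK_seq S ! j \<in> M \<union> B" using finM finB by (metis finite_UnI nth_mem set_sorted_list_of_set)
    then have "e \<le> HK_seq S ! j" by (auto simp: M_def B_def)
    then have "(fps_X ^ (HK_seq S ! j) :: 'a fps) \<in> Tl e" by (simp add: Tl_X)
    moreover have "xt j = fps_X ^ (HK_seq S ! j)" using False by (simp add: xt_def)
    ultimately show ?thesis using TeS by (auto simp: fps_X_power_subdegree)
  qed
  have nsl: "length (HK_seq R) + length (sorted_list_of_set B) = length (HK_seq S)"
    using n_eq len_hs slB by simp
  define Y where "Y = xt ` {..<length (HK_seq R) + length (sorted_list_of_set B)}"
  have YS: "Y \<subseteq> S" unfolding Y_def using xt_prop by blast
  have cov: "\<forall>d \<in> vals (max_ideal S) - vals ?mS2. \<exists>y\<in>Y. y \<noteq> 0 \<and> subdegree y = d"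
  proof
    fix d assume d: "d \<in> vals (max_ideal S) - vals ?mS2"
    then have "d \<in> VS" unfolding VS_def .
    then have "d \<in> set (HK_seq S)" unfolding set_hs .
    then obtain j where j: "j < length (HK_seq S)" "HK_seq S ! j = d" unfolding in_set_conv_nth by blast
    have "d \<noteq> 0"
    proof
      assume "d = 0"
      have "d \<in> vals (max_ideal S)" using d by blast
      then obtain f where f: "f \<in> max_ideal S" "f \<noteq> 0" "subdegree f = d" unfolding vals_def by blast
      have "f $ 0 = 0" using f(1) unfolding max_ideal_def by blast
      moreover have "f $ subdegree f \<noteq> 0" using f(2) by (rule nth_subdegree_nonzero)
      ultimately show False using f(3) \<open>d = 0\<close> by simp
    qed
    have jj: "j < length (HK_seq R) + length (sorted_list_of_set B)" using j nsl by simp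
    have "xt j \<in> Y" unfolding Y_def using jj by blast
    moreover have "subdegree (xt j) = d" using xt_prop[OF jj] j by simp
    moreover have "xt j \<noteq> 0" using \<open>subdegree (xt j) = d\<close> \<open>d \<noteq> 0\<close> by auto
    ultimately show "\<exists>y\<in>Y. y \<noteq> 0 \<and> subdegree y = d" by blast
  qed
  have SY: "S = ps_gen Y"
  proof
    show "S \<subseteq> ps_gen Y"
    proof
      fix f assume f: "f \<in> S"
      show "f \<in> ps_gen Y" unfolding ps_gen_def
      proof (intro CollectI allI)
        fix N
        obtain g where "g \<in> alg_gen Y" "f - g \<in> Tl N" using approx[OF Ss YS cov, of N] f by blast
        then show "\<exists>g\<in>alg_gen Y. \<forall>i<N. f $ i = g $ i" by (auto simp: Tl_def)
      qed
    qed
  next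
    show "ps_gen Y \<subseteq> S"
    proof
      fix f assume "f \<in> ps_gen Y"
      then obtain g where g: "g \<in> alg_gen Y" "\<forall>i<e. f $ i = g $ i" unfolding ps_gen_def by blast
      have "g \<in> S" using alg_gen_sub[OF Ss YS] g(1) by blast
      moreover have "f - g \<in> S" using g(2) TeS by (auto simp: Tl_def)
      ultimately have "g + (f - g) \<in> S" using Ss unfolding subr_def by blast
      then show "f \<in> S" by simp
    qed
  qed
  have part1: "length (HK_seq S) = length (HK_seq R) + length (sorted_list_of_set B)"
    using nsl by simp
  have part2: "\<forall>j<k. HK_seq S ! j = HK_seq R ! j"
    using lenL by (simp add: as_split hs_split nth_append)
  have part3: "set (drop k (HK_seq S)) = set (drop k (HK_seq R)) \<union> set (sorted_list_of_set B)"
    using lenL finM finB slB by (simp add: as_split hs_split)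
  have part4: "\<forall>j<length (HK_seq R) + length (sorted_list_of_set B).
      (if j < k then xs ! j else fps_X ^ (HK_seq S ! j)) \<in> S \<and>
      subdegree (if j < k then xs ! j else fps_X ^ (HK_seq S ! j)) = HK_seq S ! j"
    using xt_prop unfolding xt_def by blast
  have part5: "S = ps_gen ((\<lambda>j. if j < k then xs ! j else fps_X ^ (HK_seq S ! j)) `
      {..<length (HK_seq R) + length (sorted_list_of_set B)})"
    using SY unfolding Y_def xt_def .
  show ?thesis
    unfolding Let_def
    unfolding Seq Beq
    unfolding i0eq
    using part1 part2 part3 part4 part5 by (intro conjI)
qed

end
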